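(* Let $(M,d)$ be a compact metric space, $\varphi:M\to M$ continuous, $\mathcal G=\{G_n\}\in\mathcal A(M)$, and $\mathbb P\in\mathcal P(M)$ with $\mathrm{supp}(\mathbb P)=M$. Assume that for every $\epsilon>0$ there are $K_n(\epsilon)\ge1$ with $\lim_{\epsilon\downarrow0}\limsup_nn^{-1}\log K_n(\epsilon)=0$ such that for every $n\ge1$ the inequalities $$K_n(\epsilon)^{-1}e^{G_n(x)-n\mathfrak p_\varphi(\mathcal G)}\le\mathbb P(B_n(x,\epsilon))\le K_n(\epsilon)e^{G_n(x)-n\mathfrak p_\varphi(\mathcal G)}$$ hold for $\mathbb P$-almost every $x\in M$. Then $\mathbb P$ is a weak Gibbs measure for $\mathcal G$.
   Context: $C(M),B(M)$: continuous/bounded Borel real functions, sup norm; $S_nG=\sum_{k<n}G\circ\varphi^k$; $B_n(x,\epsilon)=\{y:d(\varphi^ky,\varphi^kx)<\epsilon,0\le k<n\}$. $\mathcal A(M)$: $\{G_n\}\subset B(M)$ with some $\{G^{(k)}\}\subset C(M)$ satisfying $\lim_k\limsup_nn^{-1}\|G_n-S_nG^{(k)}\|_\infty=0$. Pressure $\mathfrak p_\varphi(\mathcal G)=\lim_{\epsilon\downarrow0}\limsup_nn^{-1}\log\inf\{\sum_{x\in E}e^{G_n(x)}:E\text{ finite},\bigcup_{x\in E}B_n(x,\epsilon)=M\}$. Weak Gibbs measure for $\mathcal G$: $\mathbb P\in\mathcal P(M)$ such that for every $n\ge1$, $\epsilon>0$ there is $K_n(\epsilon)\ge1$ with the two-sided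 bound above holding for every $x\in M$, and $\lim_{\epsilon\downarrow0}\limsup_nn^{-1}\log K_n(\epsilon)=0$. *)

theory Defs
  imports "HOL-Probability.Probability"
begin

definition birkhoff_sum :: "('a \<Rightarrow> 'a) \<Rightarrow> nat \<Rightarrow> ('a \<Rightarrow> real) \<Rightarrow> 'a \<Rightarrow> real" where
  "birkhoff_sum \<phi> n G x = (\<Sum>k<n. G ((\<phi> ^^ k) x))"

definition sup_norm :: "('a \<Rightarrow> real) \<Rightarrow> real" where
  "sup_norm f = (SUP x. \<bar>f x\<bar>)"

definition bowen_ball :: "('a::metric_space \<Rightarrow> 'a) \<Rightarrow> nat \<Rightarrow> 'a \<Rightarrow> real \<Rightarrow> 'a set" where
  "bowen_ball \<phi> n x \<epsilon> = {y. \<forall>k<n. dist ((\<phi> ^^ k) y) ((\<phi> ^^ k) x) < \<epsilon>}"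

definition asymp_additive :: "('a::metric_space \<Rightarrow> 'a) \<Rightarrow> (nat \<Rightarrow> 'a \<Rightarrow> real) \<Rightarrow> bool" where
  "asymp_additive \<phi> G \<longleftrightarrow>
     (\<forall>n. G n \<in> borel_measurable borel \<and> bounded (range (G n))) \<and>
     (\<exists>Gk :: nat \<Rightarrow> 'a \<Rightarrow> real.
        (\<forall>k. continuous_on UNIV (Gk k)) \<and>
        ((\<lambda>k. limsup (\<lambda>n. ereal (sup_norm (\<lambda>x. G n x - birkhoff_sum \<phi> n (Gk k) x) / real n)))
           \<longlonglongrightarrow> 0))"

definition pressure_ereal :: "('a::metric_space \<Rightarrow> 'a) \<Rightarrow> (nat \<Rightarrow> 'a \<Rightarrow> real) \<Rightarrow> ereal" where
  "pressure_ereal \<phi> G =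
     Lim (at_right (0::real))
       (\<lambda>\<epsilon>. limsup (\<lambda>n. ereal (ln (Inf {(\<Sum>x\<in>E. exp (G n x)) | E.
                  finite E \<and> (\<Union>x\<in>E. bowen_ball \<phi> n x \<epsilon>) = UNIV}) / real n)))"

definition pressure :: "('a::metric_space \<Rightarrow> 'a) \<Rightarrow> (nat \<Rightarrow> 'a \<Rightarrow> real) \<Rightarrow> real" where
  "pressure \<phi> G = real_of_ereal (pressure_ereal \<phi> G)"

definition measure_support :: "'a::topological_space measure \<Rightarrow> 'a set" where
  "measure_support P = {x. \<forall>U. open U \<and> x \<in> U \<longrightarrow> emeasure P U > 0}"

definition weak_gibbs :: "('a::metric_space \<Rightarrow> 'a) \<Rightarrow> (nat \<Rightarrow> 'a \<Rightarrow> real) \<Rightarrow> 'a measure \<Rightarrow> bool" where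
  "weak_gibbs \<phi> G P \<longleftrightarrow>
     prob_space P \<and> sets P = sets borel \<and>
     (\<exists>K :: nat \<Rightarrow> real \<Rightarrow> real.
        (\<forall>n \<epsilon>. n \<ge> 1 \<and> \<epsilon> > 0 \<longrightarrow> K n \<epsilon> \<ge> 1 \<and>
           (\<forall>x. exp (G n x - real n * pressure \<phi> G) / K n \<epsilon> \<le> measure P (bowen_ball \<phi> n x \<epsilon>) \<and>
                measure P (bowen_ball \<phi> n x \<epsilon>) \<le> K n \<epsilon> * exp (G n x - real n * pressure \<phi> G))) \<and>
        ((\<lambda>\<epsilon>. limsup (\<lambda>n. ereal (ln (K n \<epsilon>) / real n))) \<longlongrightarrow> 0) (at_right 0))"

end

theory Submission imports Defs begin

lemma funpow_cont: fixes \<phi> :: "'a::topological_space \<Rightarrow> 'a" shows "continuous_on UNIV \<phi> \<Longrightarrow> continuous_on UNIV (\<phi> ^^ k)"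
proof (induction k)
  case 0
  have "\<phi>^^0 = (\<lambda>x. x)" by auto
  then show ?case by (simp add: continuous_on_id)
next
  case (Suc k)
  then show ?case using continuous_on_compose[of UNIV "\<phi>^^k" \<phi>]
    by (simp add: continuous_on_subset)
qed

lemma bowen_open:
  assumes "continuous_on UNIV \<phi>" shows "open (bowen_ball \<phi> n x \<epsilon>)"
proof -
  have "bowen_ball \<phi> n x \<epsilon> = (\<Inter>k\<in>{..<n}. {y. dist ((\<phi>^^k) y) ((\<phi>^^k) x) < \<epsilon>})"
    by (auto simp: bowen_ball_def)
  moreover have "open {y. dist ((\<phi>^^k) y) ((\<phi>^^k) x) < \<epsilon>}" for k
    by (rule open_Collect_less) (auto intro!: continuous_intros funpow_cont[OF assms])
  ultimately show ?thesis by auto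
qed

lemma bowen_sub1:
  assumes "y \<in> bowen_ball \<phi> n x (\<epsilon>/2)"
  shows "bowen_ball \<phi> n y (\<epsilon>/2) \<subseteq> bowen_ball \<phi> n x \<epsilon>"
proof
  fix z assume z: "z \<in> bowen_ball \<phi> n y (\<epsilon>/2)"
  show "z \<in> bowen_ball \<phi> n x \<epsilon>" unfolding bowen_ball_def
  proof safe
    fix k assume "k < n"
    then have "dist ((\<phi>^^k) z) ((\<phi>^^k) y) < \<epsilon>/2" "dist ((\<phi>^^k) y) ((\<phi>^^k) x) < \<epsilon>/2"
      using z assms by (auto simp: bowen_ball_def)
    then show "dist ((\<phi>^^k) z) ((\<phi>^^k) x) < \<epsilon>"
      using dist_triangle[of "(\<phi>^^k) z" "(\<phi>^^k) x" "(\<phi>^^k) y"] by linarith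
  qed
qed

lemma bowen_sub2:
  assumes "y \<in> bowen_ball \<phi> n x (\<epsilon>/2)" "\<epsilon> > 0"
  shows "bowen_ball \<phi> n x \<epsilon> \<subseteq> bowen_ball \<phi> n y (2*\<epsilon>)"
proof
  fix z assume z: "z \<in> bowen_ball \<phi> n x \<epsilon>"
  show "z \<in> bowen_ball \<phi> n y (2*\<epsilon>)" unfolding bowen_ball_def
  proof safe
    fix k assume "k < n"
    then have "dist ((\<phi>^^k) z) ((\<phi>^^k) x) < \<epsilon>" "dist ((\<phi>^^k) y) ((\<phi>^^k) x) < \<epsilon>/2"
      using z assms by (auto simp: bowen_ball_def)
    then show "dist ((\<phi>^^k) z) ((\<phi>^^k) y) < 2*\<epsilon>"
      using dist_triangle[of "(\<phi>^^k) z" "(\<phi>^^k) y" "(\<phi>^^k) x"] dist_commute[of "(\<phi>^^k) y" "(\<phi>^^k) x"] assms(2)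
      by linarith
  qed
qed

lemma self_in_bowen: "\<epsilon> > 0 \<Longrightarrow> x \<in> bowen_ball \<phi> n x \<epsilon>"
  by (simp add: bowen_ball_def)

lemma sup_norm_ge:
  assumes "\<And>x. \<bar>f x\<bar> \<le> B" shows "\<bar>f x\<bar> \<le> sup_norm f"
  unfolding sup_norm_def by (rule cSup_upper) (auto intro!: bdd_aboveI2 assms)

lemma birkhoff_bound:
  assumes "\<And>a. \<bar>g a\<bar> \<le> B" shows "\<bar>birkhoff_sum \<phi> n g x\<bar> \<le> real n * B"
proof -
  have "\<bar>birkhoff_sum \<phi> n g x\<bar> \<le> (\<Sum>k<n. \<bar>g ((\<phi>^^k) x)\<bar>)"
    unfolding birkhoff_sum_def by (rule sum_abs)
  also have "\<dots> \<le> (\<Sum>k<n. B)" by (rule sum_mono) (use assms in auto)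
  finally show ?thesis by simp
qed

definition osc :: "('a::metric_space \<Rightarrow> real) \<Rightarrow> real \<Rightarrow> real" where
  "osc g \<epsilon> = Sup {\<bar>g a - g b\<bar> | a b. dist a b < \<epsilon>}"

lemma osc_ge:
  assumes "\<And>a. \<bar>g a\<bar> \<le> B" "dist a b < \<epsilon>" shows "\<bar>g a - g b\<bar> \<le> osc g \<epsilon>"
  unfolding osc_def
proof (rule cSup_upper)
  show "bdd_above {\<bar>g a - g b\<bar> | a b. dist a b < \<epsilon>}"
  proof (rule bdd_aboveI[of _ "2*B"])
    fix z assume "z \<in> {\<bar>g a - g b\<bar> | a b. dist a b < \<epsilon>}"
    then obtain a b where "z = \<bar>g a - g b\<bar>" by auto
    then show "z \<le> 2*B" using assms(1)[of a] assms(1)[of b] by linarith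
  qed
qed (use assms in auto)

lemma osc_le:
  assumes "\<epsilon> > 0" "\<And>a b. dist a b < \<epsilon> \<Longrightarrow> \<bar>g a - g b\<bar> \<le> e" shows "osc g \<epsilon> \<le> e"
  unfolding osc_def
proof (rule cSup_least)
  show "{\<bar>g a - g b\<bar> | a b. dist a b < \<epsilon>} \<noteq> {}"
    using assms(1) by (auto intro!: exI[of _ undefined])
qed (use assms in auto)

lemma birkhoff_osc:
  assumes "\<And>a. \<bar>g a\<bar> \<le> B" "y \<in> bowen_ball \<phi> n x \<epsilon>"
  shows "\<bar>birkhoff_sum \<phi> n g x - birkhoff_sum \<phi> n g y\<bar> \<le> real n * osc g \<epsilon>"
proof -
  have "\<bar>birkhoff_sum \<phi> n g x - birkhoff_sum \<phi> n g y\<bar>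
        = \<bar>\<Sum>k<n. g ((\<phi>^^k) y) - g ((\<phi>^^k) x)\<bar>"
    unfolding birkhoff_sum_def by (simp add: sum_subtractf abs_minus_commute)
  also have "\<dots> \<le> (\<Sum>k<n. \<bar>g ((\<phi>^^k) y) - g ((\<phi>^^k) x)\<bar>)" by (rule sum_abs)
  also have "\<dots> \<le> (\<Sum>k<n. osc g \<epsilon>)"
    by (rule sum_mono, rule osc_ge[OF assms(1)]) (use assms(2) in \<open>auto simp: bowen_ball_def\<close>)
  finally show ?thesis by simp
qed

theorem lemma4p3:
  fixes \<phi> :: "'a::metric_space \<Rightarrow> 'a"
    and G :: "nat \<Rightarrow> 'a \<Rightarrow> real"
    and P :: "'a measure"
  assumes compact_space: "compact (UNIV :: 'a set)"
    and cont: "continuous_on UNIV \<phi>"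
    and GA: "asymp_additive \<phi> G"
    and prob: "prob_space P"
    and borelP: "sets P = sets borel"
    and supp: "measure_support P = UNIV"
    and gibbs_ae: "\<exists>K :: nat \<Rightarrow> real \<Rightarrow> real.
        (\<forall>n \<epsilon>. n \<ge> 1 \<and> \<epsilon> > 0 \<longrightarrow> K n \<epsilon> \<ge> 1 \<and>
           (AE x in P. exp (G n x - real n * pressure \<phi> G) / K n \<epsilon> \<le> measure P (bowen_ball \<phi> n x \<epsilon>) \<and>
                measure P (bowen_ball \<phi> n x \<epsilon>) \<le> K n \<epsilon> * exp (G n x - real n * pressure \<phi> G))) \<and>
        ((\<lambda>\<epsilon>. limsup (\<lambda>n. ereal (ln (K n \<epsilon>) / real n))) \<longlongrightarrow> 0) (at_right 0)"
  shows "weak_gibbs \<phi> G P"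
proof -
  interpret prob_space P by (rule prob)
  define p where "p = pressure \<phi> G"
  obtain K :: "nat \<Rightarrow> real \<Rightarrow> real" where
    Kprop: "\<And>n \<epsilon>. n \<ge> 1 \<Longrightarrow> \<epsilon> > 0 \<Longrightarrow> K n \<epsilon> \<ge> 1 \<and>
           (AE x in P. exp (G n x - real n * p) / K n \<epsilon> \<le> measure P (bowen_ball \<phi> n x \<epsilon>) \<and>
                measure P (bowen_ball \<phi> n x \<epsilon>) \<le> K n \<epsilon> * exp (G n x - real n * p))"
    and Klim: "((\<lambda>\<epsilon>. limsup (\<lambda>n. ereal (ln (K n \<epsilon>) / real n))) \<longlongrightarrow> 0) (at_right 0)"
    using gibbs_ae unfolding p_def by blast
  have Gbdd: "\<forall>n. bounded (range (G n))" using GA unfolding asymp_additive_def by blast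
  obtain Gk :: "nat \<Rightarrow> 'a \<Rightarrow> real" where Gkc: "\<And>k. continuous_on UNIV (Gk k)"
    and Gklim: "(\<lambda>k. limsup (\<lambda>n. ereal (sup_norm (\<lambda>x. G n x - birkhoff_sum \<phi> n (Gk k) x) / real n)))
           \<longlonglongrightarrow> 0"
    using GA unfolding asymp_additive_def by blast
  have "\<forall>n. \<exists>B. \<forall>x. \<bar>G n x\<bar> \<le> B"
    using Gbdd unfolding bounded_iff by auto
  then obtain BG where BG: "\<And>n x. \<bar>G n x\<bar> \<le> BG n" by metis
  have "\<forall>k. \<exists>B. \<forall>x. \<bar>Gk k x\<bar> \<le> B"
  proof
    fix k
    have "bounded (range (Gk k))"
      by (rule compact_imp_bounded, rule compact_continuous_image[OF Gkc compact_space])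
    then show "\<exists>B. \<forall>x. \<bar>Gk k x\<bar> \<le> B" unfolding bounded_iff by auto
  qed
  then obtain Bg where Bg: "\<And>k x. \<bar>Gk k x\<bar> \<le> Bg k" by metis
  define D where "D n \<epsilon> = Sup {\<bar>G n x - G n y\<bar> | x y. y \<in> bowen_ball \<phi> n x \<epsilon>}" for n \<epsilon>
  have D_ge: "\<bar>G n x - G n y\<bar> \<le> D n \<epsilon>" if "y \<in> bowen_ball \<phi> n x \<epsilon>" for n \<epsilon> x y
    unfolding D_def
  proof (rule cSup_upper)
    show "bdd_above {\<bar>G n x - G n y\<bar> | x y. y \<in> bowen_ball \<phi> n x \<epsilon>}"
    proof (rule bdd_aboveI[of _ "2*BG n"])
      fix z assume "z \<in> {\<bar>G n x - G n y\<bar> | x y. y \<in> bowen_ball \<phi> n x \<epsilon>}"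
      then obtain a b where "z = \<bar>G n a - G n b\<bar>" by auto
      then show "z \<le> 2 * BG n" using BG[of n a] BG[of n b] by linarith
    qed
  qed (use that in auto)
  have D_nonneg: "0 \<le> D n \<epsilon>" if "\<epsilon> > 0" for n \<epsilon>
    using D_ge[OF self_in_bowen[OF that], of n undefined] by simp
  have D_le: "D n \<epsilon> \<le> 2 * sup_norm (\<lambda>x. G n x - birkhoff_sum \<phi> n (Gk k) x) + real n * osc (Gk k) \<epsilon>"
    if "\<epsilon> > 0" for n \<epsilon> k
    unfolding D_def
  proof (rule cSup_least)
    show "{\<bar>G n x - G n y\<bar> | x y. y \<in> bowen_ball \<phi> n x \<epsilon>} \<noteq> {}"
      using self_in_bowen[OF that] by blast
  next
    fix z assume "z \<in> {\<bar>G n x - G n y\<bar> | x y. y \<in> bowen_ball \<phi> n x \<epsilon>}"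
    then obtain x y where z: "z = \<bar>G n x - G n y\<bar>" and y: "y \<in> bowen_ball \<phi> n x \<epsilon>" by auto
    let ?S = "birkhoff_sum \<phi> n (Gk k)"
    have bd: "\<bar>G n w - ?S w\<bar> \<le> BG n + real n * Bg k" for w
      using BG[of n w] birkhoff_bound[of "Gk k" "Bg k" \<phi> n w, OF Bg] by linarith
    have "\<bar>G n x - ?S x\<bar> \<le> sup_norm (\<lambda>x. G n x - ?S x)"
      by (rule sup_norm_ge[OF bd])
    moreover have "\<bar>G n y - ?S y\<bar> \<le> sup_norm (\<lambda>x. G n x - ?S x)"
      by (rule sup_norm_ge[OF bd])
    moreover have "\<bar>?S x - ?S y\<bar> \<le> real n * osc (Gk k) \<epsilon>"
      by (rule birkhoff_osc[OF Bg y])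
    ultimately show "z \<le> 2 * sup_norm (\<lambda>x. G n x - ?S x) + real n * osc (Gk k) \<epsilon>"
      unfolding z by linarith
  qed
  define K' where "K' n \<epsilon> = max (K n (\<epsilon>/2)) (K n (2*\<epsilon>)) * exp (D n (\<epsilon>/2))" for n \<epsilon>
  have Kp_ge: "K' n \<epsilon> \<ge> 1" if "n \<ge> 1" "\<epsilon> > 0" for n \<epsilon>
  proof -
    have "max (K n (\<epsilon>/2)) (K n (2*\<epsilon>)) \<ge> 1" using Kprop[OF that(1), of "\<epsilon>/2"] that by auto
    moreover have "exp (D n (\<epsilon>/2)) \<ge> 1" using D_nonneg[of "\<epsilon>/2" n] that by simp
    ultimately show ?thesis unfolding K'_def by (metis mult_mono' order.trans mult_1_left zero_le_one)
  qed
  have spaceP: "space P = UNIV" using sets_eq_imp_space_eq[OF borelP] by simp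
  have ball_sets: "bowen_ball \<phi> n x \<epsilon> \<in> sets P" for n x \<epsilon>
    using borelP bowen_open[OF cont] by auto
  have bounds: "exp (G n x - real n * p) / K' n \<epsilon> \<le> measure P (bowen_ball \<phi> n x \<epsilon>) \<and>
                measure P (bowen_ball \<phi> n x \<epsilon>) \<le> K' n \<epsilon> * exp (G n x - real n * p)"
    if n: "n \<ge> 1" and e: "\<epsilon> > 0" for n \<epsilon> x
  proof -
    let ?K1 = "K n (\<epsilon>/2)" and ?K2 = "K n (2*\<epsilon>)"
    let ?good = "\<lambda>y. (exp (G n y - real n * p) / ?K1 \<le> measure P (bowen_ball \<phi> n y (\<epsilon>/2)) \<and>
                measure P (bowen_ball \<phi> n y (\<epsilon>/2)) \<le> ?K1 * exp (G n y - real n * p)) \<and>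
               (exp (G n y - real n * p) / ?K2 \<le> measure P (bowen_ball \<phi> n y (2*\<epsilon>)) \<and>
                measure P (bowen_ball \<phi> n y (2*\<epsilon>)) \<le> ?K2 * exp (G n y - real n * p))"
    have K1: "?K1 \<ge> 1" and K2: "?K2 \<ge> 1" using Kprop[OF n, of "\<epsilon>/2"] Kprop[OF n, of "2*\<epsilon>"] e by auto
    have AEg: "AE y in P. ?good y"
      using Kprop[OF n, of "\<epsilon>/2"] Kprop[OF n, of "2*\<epsilon>"] e by (auto intro: AE_conjI)
    let ?B = "bowen_ball \<phi> n x (\<epsilon>/2)"
    have "emeasure P ?B > 0"
    proof -
      have "x \<in> measure_support P" using supp by simp
      then have "\<forall>U. open U \<and> x \<in> U \<longrightarrow> emeasure P U > 0" unfolding measure_support_def by simp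
      moreover have "open ?B \<and> x \<in> ?B" using bowen_open[OF cont, of n x "\<epsilon>/2"] self_in_bowen[of "\<epsilon>/2" x \<phi> n] e by simp
      ultimately show ?thesis by blast
    qed
    have "\<exists>y\<in>?B. ?good y"
    proof (rule ccontr)
      assume "\<not> ?thesis"
      then have "AE y in P. y \<notin> ?B" using AEg by (auto elim: AE_mp)
      then have "emeasure P ?B = 0"
        using AE_iff_measurable[OF ball_sets, of "\<lambda>y. y \<notin> ?B"] spaceP by auto
      with \<open>emeasure P ?B > 0\<close> show False by simp
    qed
    then obtain y where y: "y \<in> ?B" and gy: "?good y" by blast
    define g where "g = G n x - real n * p"
    define h where "h = G n y - real n * p"
    define Dd where "Dd = D n (\<epsilon>/2)"
    define M where "M = max ?K1 ?K2"
    have hD: "\<bar>g - h\<bar> \<le> Dd" using D_ge[OF y] unfolding g_def h_def Dd_def by simp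
    have K'eq: "K' n \<epsilon> = M * exp Dd" unfolding K'_def M_def Dd_def by simp
    have M1: "?K1 \<le> M" "?K2 \<le> M" unfolding M_def by auto
    have "exp (g - Dd) / M \<le> exp h / ?K1"
      by (rule frac_le) (use hD K1 M1 in auto)
    also have "\<dots> \<le> measure P (bowen_ball \<phi> n y (\<epsilon>/2))" using gy unfolding h_def by simp
    also have "\<dots> \<le> measure P (bowen_ball \<phi> n x \<epsilon>)"
      by (rule finite_measure_mono[OF bowen_sub1[OF y] ball_sets])
    finally have low: "exp (g - Dd) / M \<le> measure P (bowen_ball \<phi> n x \<epsilon>)" .
    have "measure P (bowen_ball \<phi> n x \<epsilon>) \<le> measure P (bowen_ball \<phi> n y (2*\<epsilon>))"
      by (rule finite_measure_mono[OF bowen_sub2[OF y e] ball_sets])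
    also have "\<dots> \<le> ?K2 * exp h" using gy unfolding h_def by simp
    also have "\<dots> \<le> M * exp (g + Dd)"
      by (rule mult_mono) (use hD K2 M1 in auto)
    finally have up: "measure P (bowen_ball \<phi> n x \<epsilon>) \<le> M * exp (g + Dd)" .
    have "exp g / K' n \<epsilon> = exp (g - Dd) / M" unfolding K'eq by (simp add: exp_diff)
    moreover have "M * exp (g + Dd) = K' n \<epsilon> * exp g" unfolding K'eq by (simp add: exp_add)
    ultimately show ?thesis using low up unfolding g_def by simp
  qed
  have lnK'eq: "ln (K' n \<epsilon>) / real n = max (ln (K n (\<epsilon>/2)) / real n) (ln (K n (2*\<epsilon>)) / real n)
       + D n (\<epsilon>/2) / real n" if n: "n \<ge> 1" and e: "\<epsilon> > 0" for n \<epsilon>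
  proof -
    have K1: "K n (\<epsilon>/2) \<ge> 1" and K2: "K n (2*\<epsilon>) \<ge> 1"
      using Kprop[OF n, of "\<epsilon>/2"] Kprop[OF n, of "2*\<epsilon>"] e by auto
    have "ln (max (K n (\<epsilon>/2)) (K n (2*\<epsilon>))) = max (ln (K n (\<epsilon>/2))) (ln (K n (2*\<epsilon>)))"
      using K1 K2 by (cases "K n (\<epsilon>/2) \<le> K n (2*\<epsilon>)") (auto simp: max_def)
    moreover have "max A B / real n = max (A / real n) (B / real n)" for A B
      using n by (auto simp: max_def divide_le_cancel)
    ultimately show ?thesis
      unfolding K'_def using K1 K2 by (simp add: ln_mult add_divide_distrib)
  qed
  have nonneg: "0 \<le> ln (K' n \<epsilon>) / real n" if e: "\<epsilon> > 0" for n \<epsilon>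
  proof (cases "n = 0")
    case False then show ?thesis using Kp_ge[of n \<epsilon>] e by simp
  qed simp
  have lim: "((\<lambda>\<epsilon>. limsup (\<lambda>n. ereal (ln (K' n \<epsilon>) / real n))) \<longlongrightarrow> 0) (at_right 0)"
  proof (rule order_tendstoI)
    fix a :: ereal assume "a < 0"
    have "eventually (\<lambda>\<epsilon>. (\<epsilon>::real) > 0) (at_right 0)" by (simp add: eventually_at_right_field) (auto intro: exI[of _ 1])
    then show "eventually (\<lambda>\<epsilon>. a < limsup (\<lambda>n. ereal (ln (K' n \<epsilon>) / real n))) (at_right 0)"
    proof (rule eventually_mono)
      fix \<epsilon> :: real assume "\<epsilon> > 0"
      then have "0 \<le> limsup (\<lambda>n. ereal (ln (K' n \<epsilon>) / real n))"
        by (intro le_Limsup) (auto simp: nonneg)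
      then show "a < limsup (\<lambda>n. ereal (ln (K' n \<epsilon>) / real n))" using \<open>a < 0\<close> by simp
    qed
  next
    fix a :: ereal assume "a > 0"
    obtain e :: real where e: "e > 0" "ereal e \<le> a"
    proof (cases a)
      case (real r) then show ?thesis using that \<open>a > 0\<close> by auto
    next
      case PInf then show ?thesis using that[of 1] by auto
    next
      case MInf then show ?thesis using \<open>a > 0\<close> by auto
    qed
    have "eventually (\<lambda>\<epsilon>. limsup (\<lambda>n. ereal (ln (K n \<epsilon>) / real n)) < ereal (e/4)) (at_right 0)"
      by (rule order_tendstoD(2)[OF Klim]) (use e in simp)
    then obtain b1 where b1: "b1 > 0" "\<And>\<epsilon>. \<epsilon> > 0 \<Longrightarrow> \<epsilon> < b1 \<Longrightarrow>
        limsup (\<lambda>n. ereal (ln (K n \<epsilon>) / real n)) < ereal (e/4)"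
      unfolding eventually_at_right_field by auto
    have "eventually (\<lambda>k. limsup (\<lambda>n. ereal (sup_norm (\<lambda>x. G n x - birkhoff_sum \<phi> n (Gk k) x) / real n)) < ereal (e/8)) sequentially"
      by (rule order_tendstoD(2)[OF Gklim]) (use e in simp)
    then obtain k where k: "limsup (\<lambda>n. ereal (sup_norm (\<lambda>x. G n x - birkhoff_sum \<phi> n (Gk k) x) / real n)) < ereal (e/8)"
      unfolding eventually_sequentially by auto
    have "uniformly_continuous_on UNIV (Gk k)"
      by (rule compact_uniformly_continuous[OF Gkc compact_space])
    then obtain d where d: "d > 0" "\<And>a b. dist b a < d \<Longrightarrow> dist (Gk k b) (Gk k a) < e/8"
      unfolding uniformly_continuous_on_def using e by (metis UNIV_I divide_pos_pos zero_less_numeral)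
    have "eventually (\<lambda>\<epsilon>. limsup (\<lambda>n. ereal (ln (K' n \<epsilon>) / real n)) \<le> ereal (5*e/8)) (at_right 0)"
      unfolding eventually_at_right_field
    proof (intro exI[of _ "min (b1/2) (2*d)"] conjI allI impI)
      show "0 < min (b1/2) (2*d)" using b1 d by simp
      fix \<epsilon> :: real assume e0: "\<epsilon> > 0" and eb: "\<epsilon> < min (b1/2) (2*d)"
      have ev1: "eventually (\<lambda>n. ereal (ln (K n (\<epsilon>/2)) / real n) < ereal (e/4)) sequentially"
        by (rule Limsup_lessD, rule b1(2)) (use e0 eb in auto)
      have ev2: "eventually (\<lambda>n. ereal (ln (K n (2*\<epsilon>)) / real n) < ereal (e/4)) sequentially"
        by (rule Limsup_lessD, rule b1(2)) (use e0 eb in auto)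
      have ev3: "eventually (\<lambda>n. ereal (sup_norm (\<lambda>x. G n x - birkhoff_sum \<phi> n (Gk k) x) / real n) < ereal (e/8)) sequentially"
        by (rule Limsup_lessD, rule k)
      have osc: "osc (Gk k) (\<epsilon>/2) \<le> e/8"
      proof (rule osc_le)
        fix a b :: 'a assume "dist a b < \<epsilon>/2"
        then have "dist a b < d" using eb by simp
        then have "dist (Gk k a) (Gk k b) < e/8" using d(2)[of a b] by (simp add: dist_commute)
        then show "\<bar>Gk k a - Gk k b\<bar> \<le> e/8" by (simp add: dist_real_def)
      qed (use e0 in simp)
      show "limsup (\<lambda>n. ereal (ln (K' n \<epsilon>) / real n)) \<le> ereal (5*e/8)"
      proof (rule Limsup_bounded)
        show "eventually (\<lambda>n. ereal (ln (K' n \<epsilon>) / real n) \<le> ereal (5*e/8)) sequentially"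
          using ev1 ev2 ev3
        proof eventually_elim
          case (elim n)
          show ?case
          proof (cases "n = 0")
            case True then show ?thesis using e by simp
          next
            case False
            then have n: "n \<ge> 1" by simp
            let ?s = "sup_norm (\<lambda>x. G n x - birkhoff_sum \<phi> n (Gk k) x)"
            have "D n (\<epsilon>/2) \<le> 2 * ?s + real n * osc (Gk k) (\<epsilon>/2)"
              by (rule D_le) (use e0 in simp)
            then have "D n (\<epsilon>/2) / real n \<le> (2 * ?s + real n * osc (Gk k) (\<epsilon>/2)) / real n"
              by (rule divide_right_mono) simp
            also have "\<dots> = 2 * (?s / real n) + osc (Gk k) (\<epsilon>/2)"
              using n by (simp add: field_simps)
            finally have Dl0: "D n (\<epsilon>/2) / real n \<le> 2 * (?s / real n) + osc (Gk k) (\<epsilon>/2)" .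
            have "?s / real n < e/8" using elim(3) by simp
            then have Dl: "D n (\<epsilon>/2) / real n \<le> 3*e/8" using Dl0 osc by linarith
            have "max (ln (K n (\<epsilon>/2)) / real n) (ln (K n (2*\<epsilon>)) / real n) < e/4"
              using elim(1,2) by simp
            then show ?thesis using lnK'eq[OF n e0] Dl by simp
          qed
        qed
      qed
    qed
    then show "eventually (\<lambda>\<epsilon>. limsup (\<lambda>n. ereal (ln (K' n \<epsilon>) / real n)) < a) (at_right 0)"
    proof (rule eventually_mono)
      fix \<epsilon> assume "limsup (\<lambda>n. ereal (ln (K' n \<epsilon>) / real n)) \<le> ereal (5*e/8)"
      moreover have "ereal (5*e/8) < ereal e" using e by simp
      ultimately show "limsup (\<lambda>n. ereal (ln (K' n \<epsilon>) / real n)) < a" using e(2) by order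
    qed
  qed
  show ?thesis
    unfolding weak_gibbs_def p_def[symmetric]
    using prob borelP Kp_ge bounds lim by blast
qed

end
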